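(* Let $\langle E,\rightarrow\rangle$ be a computation and $b$ a regular predicate. For events $e,f$, if $e\rightarrow f$ then $J_b(e)\subseteq J_b(f)$.
   Context: A computation is a directed graph $\langle E, \rightarrow\rangle$ (edge relation $\rightarrow$) whose vertices (events) are partitioned among processes, each process having an initial and a final event; $\top$ is the set of final events. A subset $C\subseteq E$ is a consistent cut if for every edge $(u,v)$, $v\in C$ implies $u\in C$. A predicate is regular if whenever consistent cuts $C_1,C_2$ satisfy it, so do $C_1\cap C_2$ and $C_1\cup C_2$ (the trivial cuts $\emptyset$ and $E$ are treated as satisfying $b$). For an event $e$, $J_b(e)$ is the least consistent cut of $\langle E,\rightarrow\rangle$ that satisfies $b$ and contains $e$; if none exists or $e\in\top$, $J_b(e)=E$. *)

theory Defs
  imports Main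
begin

text \<open>A computation: a finite set of events E with edge relation R \<subseteq> E \<times> E,
  events partitioned among processes P via proc; each process p has an initial
  event init p and a final event fin p. Following the standard convention of the
  slicing framework, initial events precede, and final events follow, every event
  of the computation (w.r.t. the reflexive-transitive closure of the edges).\<close>

definition computation ::
  "'a set \<Rightarrow> 'a rel \<Rightarrow> 'p set \<Rightarrow> ('a \<Rightarrow> 'p) \<Rightarrow> ('p \<Rightarrow> 'a) \<Rightarrow> ('p \<Rightarrow> 'a) \<Rightarrow> bool" where
  "computation E R P proc init fin \<longleftrightarrow>
     finite E \<and> R \<subseteq> E \<times> E \<and> proc ` E \<subseteq> P \<and>
     (\<forall>p\<in>P. init p \<in> E \<and> fin p \<in> E \<and> proc (init p) = p \<and> proc (fin p) = p) \<and>
     (\<forall>p\<in>P. \<forall>e\<in>E. (init p, e) \<in> R\<^sup>* \<and> (e, fin p) \<in> R\<^sup>*)"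

definition final_events :: "'p set \<Rightarrow> ('p \<Rightarrow> 'a) \<Rightarrow> 'a set" where
  "final_events P fin = fin ` P"

definition consistent_cut :: "'a set \<Rightarrow> 'a rel \<Rightarrow> 'a set \<Rightarrow> bool" where
  "consistent_cut E R C \<longleftrightarrow> C \<subseteq> E \<and> (\<forall>(u, v) \<in> R. v \<in> C \<longrightarrow> u \<in> C)"

definition sat :: "'a set \<Rightarrow> ('a set \<Rightarrow> bool) \<Rightarrow> 'a set \<Rightarrow> bool" where
  "sat E b C \<longleftrightarrow> C = {} \<or> C = E \<or> b C"

definition regular :: "'a set \<Rightarrow> 'a rel \<Rightarrow> ('a set \<Rightarrow> bool) \<Rightarrow> bool" where
  "regular E R b \<longleftrightarrow>
     (\<forall>C1 C2. consistent_cut E R C1 \<longrightarrow> consistent_cut E R C2 \<longrightarrow>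
        sat E b C1 \<longrightarrow> sat E b C2 \<longrightarrow> sat E b (C1 \<inter> C2) \<and> sat E b (C1 \<union> C2))"

definition least_cut :: "'a set \<Rightarrow> 'a rel \<Rightarrow> ('a set \<Rightarrow> bool) \<Rightarrow> 'a \<Rightarrow> 'a set \<Rightarrow> bool" where
  "least_cut E R b e C \<longleftrightarrow>
     consistent_cut E R C \<and> sat E b C \<and> e \<in> C \<and>
     (\<forall>C'. consistent_cut E R C' \<longrightarrow> sat E b C' \<longrightarrow> e \<in> C' \<longrightarrow> C \<subseteq> C')"

definition J :: "'a set \<Rightarrow> 'a rel \<Rightarrow> 'p set \<Rightarrow> ('p \<Rightarrow> 'a) \<Rightarrow> ('a set \<Rightarrow> bool) \<Rightarrow> 'a \<Rightarrow> 'a set" where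
  "J E R P fin b e =
     (if e \<in> final_events P fin \<or> \<not> (\<exists>C. least_cut E R b e C) then E
      else (THE C. least_cut E R b e C))"

end

theory Submission
  imports Defs
begin

lemma cc_inter: "consistent_cut E R A \<Longrightarrow> consistent_cut E R B \<Longrightarrow> consistent_cut E R (A \<inter> B)"
  unfolding consistent_cut_def by blast

lemma cc_rtrancl: "(u, v) \<in> R\<^sup>* \<Longrightarrow> consistent_cut E R C \<Longrightarrow> v \<in> C \<Longrightarrow> u \<in> C"
proof (induction rule: converse_rtrancl_induct)
  case base then show ?case by simp
next
  case (step y z) then show ?case unfolding consistent_cut_def by blast
qed

lemma least_exists:
  assumes fin: "finite E" and RE: "R \<subseteq> E \<times> E" and reg: "regular E R b" and eE: "e \<in> E"
  shows "\<exists>C. least_cut E R b e C"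
proof -
  let ?P = "\<lambda>C. consistent_cut E R C \<and> sat E b C \<and> e \<in> C"
  have "?P E" using RE eE unfolding consistent_cut_def sat_def by blast
  then obtain C where C: "?P C" and m: "\<And>C'. ?P C' \<Longrightarrow> card C \<le> card C'"
    using ex_has_least_nat[of ?P E card] by blast
  have "least_cut E R b e C"
    unfolding least_cut_def
  proof (intro conjI allI impI)
    fix C' assume a: "consistent_cut E R C'" "sat E b C'" "e \<in> C'"
    have P': "?P (C \<inter> C')" using C a reg cc_inter unfolding regular_def by blast
    have fC: "finite C" using C fin unfolding consistent_cut_def by (meson finite_subset)
    have "card C \<le> card (C \<inter> C')" using m P' by blast
    hence "C \<inter> C' = C" using fC by (meson Int_lower1 card_seteq)
    then show "C \<subseteq> C'" by blast
  qed (use C in auto)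
  then show ?thesis by blast
qed

lemma least_unique: "least_cut E R b e C \<Longrightarrow> least_cut E R b e D \<Longrightarrow> C = D"
  unfolding least_cut_def by blast

theorem lemma6:
  assumes "computation E R P proc init fin"
    and "regular E R b"
    and "(e, f) \<in> R"
  shows "J E R P fin b e \<subseteq> J E R P fin b f"
proof -
  have fin: "finite E" and RE: "R \<subseteq> E \<times> E" and cp: "\<forall>p\<in>P. \<forall>x\<in>E. (x, fin p) \<in> R\<^sup>*"
    using assms(1) unfolding computation_def by auto
  have eE: "e \<in> E" and fE: "f \<in> E" using RE assms(3) by auto
  have Jsub: "J E R P fin b x \<subseteq> E" for x
  proof (cases "x \<in> final_events P fin \<or> \<not> (\<exists>C. least_cut E R b x C)")
    case True then show ?thesis unfolding J_def by simp
  next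
    case False
    then obtain C where C: "least_cut E R b x C" by blast
    hence "(THE C. least_cut E R b x C) = C" using least_unique by (metis the_equality)
    then show ?thesis using False C unfolding J_def least_cut_def consistent_cut_def by simp
  qed
  show ?thesis
  proof (cases "f \<in> final_events P fin \<or> \<not> (\<exists>C. least_cut E R b f C)")
    case True then show ?thesis using Jsub unfolding J_def[of E R P fin b f] by simp
  next
    case False
    then obtain Cf where Cf: "least_cut E R b f Cf" by blast
    hence JF: "J E R P fin b f = Cf" using False least_unique unfolding J_def
      by (metis (no_types, lifting) the_equality)
    have ccf: "consistent_cut E R Cf" "sat E b Cf" "f \<in> Cf" using Cf unfolding least_cut_def by auto
    have eCf: "e \<in> Cf" using ccf(1,3) assms(3) unfolding consistent_cut_def by blast
    obtain Ce where Ce: "least_cut E R b e Ce" using least_exists[OF fin RE assms(2) eE] by blast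
    show ?thesis
    proof (cases "e \<in> final_events P fin")
      case True
      then obtain p where p: "p \<in> P" "e = fin p" unfolding final_events_def by blast
      have "E \<subseteq> Cf"
      proof
        fix x assume "x \<in> E"
        hence "(x, e) \<in> R\<^sup>*" using cp p by blast
        then show "x \<in> Cf" using cc_rtrancl ccf(1) eCf by metis
      qed
      then show ?thesis using JF Jsub by blast
    next
      case False
      hence "J E R P fin b e = Ce" using Ce least_unique unfolding J_def
        by (metis (no_types, lifting) the_equality)
      moreover have "Ce \<subseteq> Cf" using Ce ccf eCf unfolding least_cut_def by blast
      ultimately show ?thesis using JF by simp
    qed
  qed
qed

end
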